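(* Let $\mathcal{A}=[M]^K$, $\mathcal{B}=[K]\times[M]$ with coherence relation $\mathcal{R}_C$, and let $\emptyset\subsetneq B\subsetneq\mathcal{B}$. Define $$\mathcal{R}_C(B)=\big[\mathcal{R}_C\cap(\mathcal{N}'_{\mathcal{R}_C}(B)\times B)\big]\cup\big[\mathcal{R}_C\cap(\overline{\mathcal{N}'_{\mathcal{R}_C}(B)}\times\overline{B})\big],$$ viewed as the edge set of a bipartite graph on $\mathcal{A}\sqcup\mathcal{B}$. Then: (1) every pair $(a,b)$ with $b\in\overline{B}$ and $a\in\overline{\mathcal{N}'_{\mathcal{R}_C}(B)}$ is connected by a path in $\mathcal{R}_C(B)$; (2) if $|B|>1$ and $B$ contains elements $(i,y),(i',y')$ with $i\ne i'$, then every $b\in B$ and every $a\in\mathcal{N}'_{\mathcal{R}_C}(B)$ are connected by a path in $\mathcal{R}_C(B)$.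
   Context: $[n]=\{1,\dots,n\}$. Coherence relation: $((y^1,\dots,y^K),(i,y))\in\mathcal{R}_C$ iff $y^i=y$. For $B\subseteq\mathcal{B}$, $\mathcal{N}'_{\mathcal{R}_C}(B)=\{a\in\mathcal{A}:\exists b\in B,(a,b)\in\mathcal{R}_C\}$. Overlines denote complements in $\mathcal{A}$ or $\mathcal{B}$. For $(i,y)\in\mathcal{B}$, $i$ is called its $X$-level. *)

theory Defs
  imports "HOL-Library.FuncSet"
begin

definition Aset :: "nat \<Rightarrow> nat \<Rightarrow> (nat \<Rightarrow> nat) set" where
  "Aset K M = ({1..K} \<rightarrow>\<^sub>E {1..M})"

definition Bset :: "nat \<Rightarrow> nat \<Rightarrow> (nat \<times> nat) set" where
  "Bset K M = {1..K} \<times> {1..M}"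

definition RC :: "nat \<Rightarrow> nat \<Rightarrow> ((nat \<Rightarrow> nat) \<times> (nat \<times> nat)) set" where
  "RC K M = {(a, (i, y)). a \<in> Aset K M \<and> (i, y) \<in> Bset K M \<and> a i = y}"

definition Nbr :: "nat \<Rightarrow> nat \<Rightarrow> (nat \<times> nat) set \<Rightarrow> (nat \<Rightarrow> nat) set" where
  "Nbr K M B = {a \<in> Aset K M. \<exists>b\<in>B. (a, b) \<in> RC K M}"

definition RCB :: "nat \<Rightarrow> nat \<Rightarrow> (nat \<times> nat) set \<Rightarrow> ((nat \<Rightarrow> nat) \<times> (nat \<times> nat)) set" where
  "RCB K M B = (RC K M \<inter> (Nbr K M B \<times> B))
     \<union> (RC K M \<inter> ((Aset K M - Nbr K M B) \<times> (Bset K M - B)))"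

definition bip_edges :: "('a \<times> 'b) set \<Rightarrow> ('a + 'b) rel" where
  "bip_edges R = {(Inl a, Inr b) | a b. (a, b) \<in> R} \<union> {(Inr b, Inl a) | a b. (a, b) \<in> R}"

definition connected_in :: "('a \<times> 'b) set \<Rightarrow> 'a + 'b \<Rightarrow> 'a + 'b \<Rightarrow> bool" where
  "connected_in R u v \<longleftrightarrow> (u, v) \<in> (bip_edges R)\<^sup>*"

end

theory Submission
  imports Defs
begin

lemma edge_fw: "(a,b) \<in> R \<Longrightarrow> (Inl a, Inr b) \<in> (bip_edges R)\<^sup>*"
  unfolding bip_edges_def by blast

lemma edge_bw: "(a,b) \<in> R \<Longrightarrow> (Inr b, Inl a) \<in> (bip_edges R)\<^sup>*"
  unfolding bip_edges_def by blast

lemma upd_A: "a \<in> Aset K M \<Longrightarrow> j \<in> {1..K} \<Longrightarrow> y \<in> {1..M} \<Longrightarrow> a(j:=y) \<in> Aset K M"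
  unfolding Aset_def by (auto simp: PiE_def extensional_def)

lemma A_val: "a \<in> Aset K M \<Longrightarrow> i \<in> {1..K} \<Longrightarrow> (i, a i) \<in> Bset K M"
  unfolding Aset_def Bset_def by auto

lemma inNbr0: "a \<in> Aset K M \<Longrightarrow> i \<in> {1..K} \<Longrightarrow> (i, a i) \<in> B \<Longrightarrow> a \<in> Nbr K M B"
proof -
  assume h: "a \<in> Aset K M" "i \<in> {1..K}" "(i, a i) \<in> B"
  have "(i, a i) \<in> Bset K M" using A_val h by blast
  then have "(a, (i, a i)) \<in> RC K M" using h unfolding RC_def by blast
  then show ?thesis unfolding Nbr_def using h by blast
qed

lemma notNbr: assumes hA: "a \<in> Aset K M" shows "a \<notin> Nbr K M B \<longleftrightarrow> (\<forall>i\<in>{1..K}. (i, a i) \<notin> B)"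
proof
  assume "a \<notin> Nbr K M B" then have h: "a \<in> Aset K M" "a \<notin> Nbr K M B" using hA by auto
  show "\<forall>i\<in>{1..K}. (i, a i) \<notin> B"
  proof (intro ballI notI)
    fix i assume "i \<in> {1..K}" "(i, a i) \<in> B"
    then have "a \<in> Nbr K M B" using inNbr0[OF h(1)] by blast
    then show False using h by blast
  qed
next
  assume "\<forall>i\<in>{1..K}. (i, a i) \<notin> B" then have h: "a \<in> Aset K M" "\<forall>i\<in>{1..K}. (i, a i) \<notin> B" using hA by auto
  show "a \<notin> Nbr K M B"
  proof
    assume "a \<in> Nbr K M B"
    then obtain i y where "(i,y) \<in> B" "(a,(i,y)) \<in> RC K M" unfolding Nbr_def by auto
    then have "i \<in> {1..K}" "a i = y" unfolding RC_def Bset_def by auto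
    then show False using h \<open>(i,y) \<in> B\<close> by blast
  qed
qed

lemmas inNbr = inNbr0

lemma RC_I: "a \<in> Aset K M \<Longrightarrow> (i, a i) \<in> Bset K M \<Longrightarrow> (a, (i, a i)) \<in> RC K M"
  unfolding RC_def by auto

lemma edge_out: "a \<in> Aset K M \<Longrightarrow> a \<notin> Nbr K M B \<Longrightarrow> i \<in> {1..K} \<Longrightarrow> (a, (i, a i)) \<in> RCB K M B"
proof -
  assume h: "a \<in> Aset K M" "a \<notin> Nbr K M B" "i \<in> {1..K}"
  have b: "(i, a i) \<in> Bset K M" using A_val h by blast
  have nb: "(i, a i) \<notin> B" using notNbr[OF h(1)] h by simp
  have "(a, (i, a i)) \<in> RC K M" using RC_I h(1) b by blast
  then show ?thesis unfolding RCB_def using h b nb by simp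
qed

lemma edge_in: "a \<in> Aset K M \<Longrightarrow> i \<in> {1..K} \<Longrightarrow> (i, a i) \<in> B \<Longrightarrow> (a, (i, a i)) \<in> RCB K M B"
proof -
  assume h: "a \<in> Aset K M" "i \<in> {1..K}" "(i, a i) \<in> B"
  have b: "(i, a i) \<in> Bset K M" using A_val h by blast
  have nb: "a \<in> Nbr K M B" using inNbr h by blast
  have "(a, (i, a i)) \<in> RC K M" using RC_I h(1) b by blast
  then show ?thesis unfolding RCB_def using h nb by simp
qed

lemma other_level: "(2::nat) \<le> K \<Longrightarrow> j \<in> {1..K} \<Longrightarrow> \<exists>i\<in>{1..K}. i \<noteq> j"
  by (rule bexI[of _ "if j = 1 then 2 else 1"]) auto

theorem lemma8:
  fixes K M :: nat and B :: "(nat \<times> nat) set"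
  assumes K2: "2 \<le> K"
    and Bne: "B \<noteq> {}" and Bsub: "B \<subset> Bset K M"
  shows "(\<forall>a \<in> Aset K M - Nbr K M B. \<forall>b \<in> Bset K M - B.
            connected_in (RCB K M B) (Inl a) (Inr b))
       \<and> ((card B > 1 \<and> (\<exists>i y i' y'. (i, y) \<in> B \<and> (i', y') \<in> B \<and> i \<noteq> i'))
            \<longrightarrow> (\<forall>b \<in> B. \<forall>a \<in> Nbr K M B. connected_in (RCB K M B) (Inl a) (Inr b)))"
proof (intro conjI impI ballI)
  let ?R = "RCB K M B"
  fix a b assume a: "a \<in> Aset K M - Nbr K M B" and b: "b \<in> Bset K M - B"
  obtain j y where bj: "b = (j, y)" by (cases b)
  have j: "j \<in> {1..K}" and y: "y \<in> {1..M}" and jy: "(j,y) \<notin> B" using b bj Bset_def by auto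
  obtain i where i: "i \<in> {1..K}" "i \<noteq> j" using other_level[OF K2 j] by blast
  define a2 where "a2 = a(j:=y)"
  have aA: "a \<in> Aset K M" "a \<notin> Nbr K M B" using a by auto
  have a2A: "a2 \<in> Aset K M" using upd_A[OF aA(1) j y] a2_def by simp
  have "\<forall>k\<in>{1..K}. (k, a2 k) \<notin> B" using notNbr[OF aA(1)] aA(2) jy unfolding a2_def by auto
  then have a2N: "a2 \<notin> Nbr K M B" using notNbr[OF a2A] by simp
  have f1: "(Inl a, Inr (i, a i)) \<in> (bip_edges ?R)\<^sup>*" using edge_fw[OF edge_out[OF aA i(1)]] by simp
  have f2: "(Inr (i, a i), Inl a2) \<in> (bip_edges ?R)\<^sup>*"
    using edge_bw[OF edge_out[OF a2A a2N i(1)]] i(2) unfolding a2_def by simp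
  have f3: "(Inl a2, Inr (j, y)) \<in> (bip_edges ?R)\<^sup>*"
    using edge_fw[OF edge_out[OF a2A a2N j]] unfolding a2_def by simp
  show "connected_in ?R (Inl a) (Inr b)" unfolding connected_in_def bj
    by (rule rtrancl_trans[OF rtrancl_trans[OF f1 f2] f3])
next
  let ?R = "RCB K M B"
  fix a b
  assume H: "1 < card B \<and> (\<exists>i y i' y'. (i, y) \<in> B \<and> (i', y') \<in> B \<and> i \<noteq> i')"
    and b: "b \<in> B" and a: "a \<in> Nbr K M B"
  obtain j y where bj: "b = (j, y)" by (cases b)
  have jyB: "(j,y) \<in> B" using b bj by simp
  have j: "j \<in> {1..K}" and y: "y \<in> {1..M}" using jyB Bsub Bset_def by auto
  have aA: "a \<in> Aset K M" using a Nbr_def by auto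
  obtain i where i: "i \<in> {1..K}" "(i, a i) \<in> B" using a unfolding Nbr_def RC_def Bset_def by auto
  have conn: "(Inl c, Inr (j', y')) \<in> (bip_edges ?R)\<^sup>*"
    if c: "c \<in> Aset K M" and i': "i' \<in> {1..K}" "(i', c i') \<in> B" and j': "(j', y') \<in> B" "i' \<noteq> j'"
    for c i' j' y'
  proof -
    have j'': "j' \<in> {1..K}" "y' \<in> {1..M}" using j' Bsub Bset_def by auto
    define c2 where "c2 = c(j':=y')"
    have c2A: "c2 \<in> Aset K M" using upd_A[OF c j''] c2_def by simp
    have f1: "(Inl c, Inr (i', c i')) \<in> (bip_edges ?R)\<^sup>*" using edge_fw[OF edge_in[OF c i']] by simp
    have f2: "(Inr (i', c i'), Inl c2) \<in> (bip_edges ?R)\<^sup>*"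
      using edge_bw[OF edge_in[OF c2A i'(1)]] i' j' unfolding c2_def by simp
    have f3: "(Inl c2, Inr (j', y')) \<in> (bip_edges ?R)\<^sup>*"
      using edge_fw[OF edge_in[OF c2A j''(1)]] j' unfolding c2_def by simp
    show ?thesis by (rule rtrancl_trans[OF rtrancl_trans[OF f1 f2] f3])
  qed
  show "connected_in ?R (Inl a) (Inr b)"
  proof (cases "i = j")
    case False
    show ?thesis unfolding connected_in_def bj by (rule conn[OF aA i jyB False])
  next
    case True
    have "\<exists>k z. (k,z) \<in> B \<and> k \<noteq> i"
    proof -
      obtain i1 y1 i2 y2 where "(i1, y1) \<in> B" "(i2, y2) \<in> B" "i1 \<noteq> i2" using H by blast
      then show ?thesis by (cases "i1 = i") auto
    qed
    then obtain k z where kz: "(k,z) \<in> B" "k \<noteq> i" by blast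
    have kK: "k \<in> {1..K}" "z \<in> {1..M}" using kz Bsub Bset_def by auto
    define a3 where "a3 = a(k:=z)"
    have a3A: "a3 \<in> Aset K M" using upd_A[OF aA kK] a3_def by simp
    have f1: "(Inl a, Inr (k, z)) \<in> (bip_edges ?R)\<^sup>*" using conn[OF aA i kz(1)] kz(2) by simp
    have f2: "(Inr (k, z), Inl a3) \<in> (bip_edges ?R)\<^sup>*"
      using edge_bw[OF edge_in[OF a3A kK(1)]] kz unfolding a3_def by simp
    have f3: "(Inl a3, Inr (j, y)) \<in> (bip_edges ?R)\<^sup>*"
      using conn[OF a3A kK(1) _ jyB] kz True unfolding a3_def by simp
    show ?thesis unfolding connected_in_def bj by (rule rtrancl_trans[OF rtrancl_trans[OF f1 f2] f3])
  qed
qed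

end
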